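(* Let $X^{\mathrm{aff}}$ be one of the affine extensions $A_4^=$, $D_6^>$, $D_6^=$, $D_6^<$, with extended Cartan matrix $A^{\mathrm{aff}}=(A^{\mathrm{aff}}_{ij})_{0\le i,j\le n}$, simple roots $\alpha_1,\dots,\alpha_n$ (a basis of $V_n$), affine root $\alpha_0\in V_n$, and projection $\pi\in\{\pi_\parallel,\pi_\perp\}$ as in the context. Let $\rho$ be any Dynkin diagram automorphism of $X^{\mathrm{aff}}$, i.e. a permutation of $\{0,1,\dots,n\}$ with $A^{\mathrm{aff}}_{\rho(i)\rho(j)}=A^{\mathrm{aff}}_{ij}$ for all $i,j$ (this includes the automorphisms of the unextended diagrams $A_4$ and $D_6$, extended by $\rho(0)=0$). Then $\alpha_{\rho(1)},\dots,\alpha_{\rho(n)}$ is a basis of $V_n$; if $\pi^\rho:V_n\to\mathbb{R}^m$ denotes the linear map with $\pi^\rho(\alpha_{\rho(i)})=\pi(\alpha_i)$ for $i=1,\dots,n$, then $\pi^\rho(\alpha_{\rho(0)})=\pi(\alpha_0)$. Consequently the induced affine root, and hence the induced Cartan matrix $\hat A_{ij}=2(a_i\mid a_j)/(a_i\mid a_i)$ ($a_0$ the induced affine root, $a_1,\dots,a_m$ the simple roots of $H_m$), is the same whether the projection $\pi$ or the automorphism-twisted projection $\pi^\rho$ is used.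
   Context: Let $\tau=\tfrac12(1+\sqrt5)$, $\sigma=\tfrac12(1-\sqrt5)$. $V_n$ is a real vector space with basis $\alpha_1,\dots,\alpha_n$. Labelling: $A_4$: chain $\alpha_1-\alpha_2-\alpha_3-\alpha_4$; $D_6$: chain $\alpha_1-\cdots-\alpha_5$ with $\alpha_6$ joined to $\alpha_4$. The Cartan matrix of a simply-laced diagram has $A_{ii}=2$, $A_{ij}=-1$ if nodes $i,j$ are joined and $0$ otherwise. Extended Cartan matrices (indices $0,\dots,n$): $A_4^=$: the simply-laced cycle $0-1-2-3-4-0$; $D_6^=$: the $D_6$ diagram with node $0$ joined to node $2$ (simply laced); $D_6^<$: the $D_6$ Cartan matrix extended by node $0$ with $A_{01}=-2$, $A_{10}=-1$, $A_{0j}=A_{j0}=0$ for $j\ge2$; $D_6^>$: same but $A_{01}=-1$, $A_{10}=-2$. Affine roots in $V_n$: $A_4^=$: $-\alpha_0=\alpha_1+\alpha_2+\alpha_3+\alpha_4$; $D_6^=$: $-\alpha_0=\alpha_1+2\alpha_2+2\alpha_3+2\alpha_4+\alpha_5+\alpha_6$; $D_6^<$: $-\alpha_0=\alpha_1+\alpha_2+\alpha_3+\alpha_4+\tfrac12\alpha_5+\tfrac12\alpha_6$; $D_6^>$: $-\alpha_0=2\alpha_1+2\alpha_2+2\alpha_3+2\alpha_4+\alpha_5+\alpha_6$. Target: for $H_3$ ($m=3$), vectors $a_1,a_2,a_3\in\mathbb{R}^3$ with $(a_i\mid a_i)=1$, $(a_1\mid a_2)=-\tfrac12$, $(a_2\mid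 a_3)=-\tfrac\tau2$, $(a_1\mid a_3)=0$; for $H_2$ ($m=2$), $a_1,a_2\in\mathbb{R}^2$ with $(a_i\mid a_i)=1$, $(a_1\mid a_2)=-\tfrac\tau2$. Vectors $\bar a_i$ are defined likewise with $\tau$ replaced by $\sigma$. Projections: $\pi_\parallel:V_6\to\mathbb{R}^3$ ($D_6\to H_3$) by $\alpha_1\mapsto a_1$, $\alpha_2\mapsto a_2$, $\alpha_3\mapsto\tau a_3$, $\alpha_4\mapsto\tau a_2$, $\alpha_5\mapsto\tau a_1$, $\alpha_6\mapsto a_3$; $\pi_\parallel:V_4\to\mathbb{R}^2$ ($A_4\to H_2$) by $\alpha_1\mapsto a_1$, $\alpha_2\mapsto\tau a_2$, $\alpha_3\mapsto\tau a_1$, $\alpha_4\mapsto a_2$. $\pi_\perp$ is given by the same formulas with $\tau\to\sigma$ and $a_i\to\bar a_i$. The induced affine root is $\pi(\alpha_0)$. *)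

theory Defs
  imports "HOL-Analysis.Analysis"
begin

definition tau :: real where "tau = (1 + sqrt 5) / 2"
definition sig :: real where "sig = (1 - sqrt 5) / 2"

definition sl_cartan :: "(nat \<Rightarrow> nat \<Rightarrow> bool) \<Rightarrow> nat \<Rightarrow> nat \<Rightarrow> real" where
  "sl_cartan E i j = (if i = j then 2 else if E i j \<or> E j i then -1 else 0)"

definition edgeA4 :: "nat \<Rightarrow> nat \<Rightarrow> bool" where
  "edgeA4 i j \<longleftrightarrow> (i, j) \<in> {(1,2),(2,3),(3,4)}"
definition edgeD6 :: "nat \<Rightarrow> nat \<Rightarrow> bool" where
  "edgeD6 i j \<longleftrightarrow> (i, j) \<in> {(1,2),(2,3),(3,4),(4,5),(4,6)}"

definition cartan_A4_eq :: "nat \<Rightarrow> nat \<Rightarrow> real" where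
  "cartan_A4_eq = sl_cartan (\<lambda>i j. edgeA4 i j \<or> (i, j) \<in> {(0,1),(4,0)})"
definition cartan_D6_eq :: "nat \<Rightarrow> nat \<Rightarrow> real" where
  "cartan_D6_eq = sl_cartan (\<lambda>i j. edgeD6 i j \<or> (i, j) = (0,2))"
definition cartan_D6_lt :: "nat \<Rightarrow> nat \<Rightarrow> real" where
  "cartan_D6_lt i j = (if (i, j) = (0,1) then -2 else if (i, j) = (1,0) then -1
                       else sl_cartan edgeD6 i j)"
definition cartan_D6_gt :: "nat \<Rightarrow> nat \<Rightarrow> real" where
  "cartan_D6_gt i j = (if (i, j) = (0,1) then -1 else if (i, j) = (1,0) then -2
                       else sl_cartan edgeD6 i j)"

text \<open>Coefficients c with  -alpha_0 = sum_{j=1..n} c_j alpha_j.\<close>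
definition coef_A4_eq :: "nat \<Rightarrow> real" where
  "coef_A4_eq j = (if j \<in> {1..4} then 1 else 0)"
definition coef_D6_eq :: "nat \<Rightarrow> real" where
  "coef_D6_eq j = (if j \<in> {1,5,6} then 1 else if j \<in> {2,3,4} then 2 else 0)"
definition coef_D6_lt :: "nat \<Rightarrow> real" where
  "coef_D6_lt j = (if j \<in> {1..4} then 1 else if j \<in> {5,6} then 1/2 else 0)"
definition coef_D6_gt :: "nat \<Rightarrow> real" where
  "coef_D6_gt j = (if j \<in> {1..4} then 2 else if j \<in> {5,6} then 1 else 0)"

definition ext_root :: "nat \<Rightarrow> (nat \<Rightarrow> real) \<Rightarrow> (nat \<Rightarrow> 'v::real_vector) \<Rightarrow> nat \<Rightarrow> 'v" where
  "ext_root n c \<alpha> i = (if i = 0 then - (\<Sum>j=1..n. c j *\<^sub>R \<alpha> j) else \<alpha> i)"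

text \<open>Images of the simple roots under the projections (t = tau or sigma, a = target roots).\<close>
definition img_D6 :: "real \<Rightarrow> (nat \<Rightarrow> 'w::real_vector) \<Rightarrow> nat \<Rightarrow> 'w" where
  "img_D6 t a i = (if i = 1 then a 1 else if i = 2 then a 2 else if i = 3 then t *\<^sub>R a 3
     else if i = 4 then t *\<^sub>R a 2 else if i = 5 then t *\<^sub>R a 1 else if i = 6 then a 3 else 0)"
definition img_A4 :: "real \<Rightarrow> (nat \<Rightarrow> 'w::real_vector) \<Rightarrow> nat \<Rightarrow> 'w" where
  "img_A4 t a i = (if i = 1 then a 1 else if i = 2 then t *\<^sub>R a 2 else if i = 3 then t *\<^sub>R a 1
     else if i = 4 then a 2 else 0)"

definition dynkin_aut :: "nat \<Rightarrow> (nat \<Rightarrow> nat \<Rightarrow> real) \<Rightarrow> (nat \<Rightarrow> nat) \<Rightarrow> bool" where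
  "dynkin_aut n A \<rho> \<longleftrightarrow> bij_betw \<rho> {0..n} {0..n} \<and>
     (\<forall>i\<in>{0..n}. \<forall>j\<in>{0..n}. A (\<rho> i) (\<rho> j) = A i j)"

definition induced_cartan :: "(nat \<Rightarrow> 'w::real_inner) \<Rightarrow> 'w \<Rightarrow> nat \<Rightarrow> nat \<Rightarrow> real" where
  "induced_cartan a a0 i j =
     (let b = (\<lambda>k. if k = 0 then a0 else a k) in 2 * inner (b i) (b j) / inner (b i) (b i))"

text \<open>The claim of the theorem for one extended diagram (n, A, c), one basis alpha of V_n,
  one projection (given by the images img i of alpha_i) and target simple roots a_1..a_m.\<close>
definition twist_claim :: "nat \<Rightarrow> (nat \<Rightarrow> nat \<Rightarrow> real) \<Rightarrow> (nat \<Rightarrow> real) \<Rightarrow> (nat \<Rightarrow> 'v::real_vector)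
    \<Rightarrow> (nat \<Rightarrow> 'w::real_inner) \<Rightarrow> nat \<Rightarrow> (nat \<Rightarrow> 'w) \<Rightarrow> bool" where
  "twist_claim n A c \<alpha> img m a \<longleftrightarrow>
    (\<forall>\<rho>. dynkin_aut n A \<rho> \<longrightarrow>
      inj_on (ext_root n c \<alpha> \<circ> \<rho>) {1..n} \<and>
      independent ((ext_root n c \<alpha> \<circ> \<rho>) ` {1..n}) \<and>
      span ((ext_root n c \<alpha> \<circ> \<rho>) ` {1..n}) = UNIV \<and>
      (\<forall>p f. linear p \<and> (\<forall>i\<in>{1..n}. p (\<alpha> i) = img i) \<and>
             linear f \<and> (\<forall>i\<in>{1..n}. f (ext_root n c \<alpha> (\<rho> i)) = p (\<alpha> i)) \<longrightarrow>
         f (ext_root n c \<alpha> (\<rho> 0)) = p (ext_root n c \<alpha> 0) \<and>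
         (\<forall>i\<in>{0..m}. \<forall>j\<in>{0..m}.
            induced_cartan a (f (ext_root n c \<alpha> (\<rho> 0))) i j
            = induced_cartan a (p (ext_root n c \<alpha> 0)) i j)))"

end

theory Submission
  imports Defs
begin

definition ce :: "(nat \<Rightarrow> real) \<Rightarrow> nat \<Rightarrow> real" where
  "ce c i = (if i = 0 then 1 else c i)"

lemma exch:
  fixes \<alpha> :: "nat \<Rightarrow> 'v::real_vector"
  assumes inj: "inj_on \<alpha> {1..n}" and ind: "independent (\<alpha> ` {1..n})"
    and sp: "span (\<alpha> ` {1..n}) = UNIV"
    and nz: "\<forall>k\<in>{1..n}. c k \<noteq> 0" and k: "k \<in> {0..n}"
  shows "span (ext_root n c \<alpha> ` ({0..n}-{k})) = UNIV \<and>
         independent (ext_root n c \<alpha> ` ({0..n}-{k})) \<and>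
         inj_on (ext_root n c \<alpha>) ({0..n}-{k})"
proof (cases "k = 0")
  case True
  have e: "{0..n} - {k} = {1..n}" using True by auto
  have im: "ext_root n c \<alpha> ` {1..n} = \<alpha> ` {1..n}"
    by (rule image_cong) (auto simp: ext_root_def)
  have ij: "inj_on (ext_root n c \<alpha>) {1..n}"
    by (rule inj_on_cong[THEN iffD2, OF _ inj]) (simp add: ext_root_def)
  show ?thesis unfolding e im using ij ind sp by blast
next
  case False
  let ?S = "ext_root n c \<alpha> ` ({0..n}-{k})"
  have k1: "k \<in> {1..n}" using k False by auto
  have aS: "\<alpha> j \<in> ?S" if "j \<in> {1..n}" "j \<noteq> k" for j
  proof -
    have "ext_root n c \<alpha> j = \<alpha> j" using that by (simp add: ext_root_def)
    moreover have "j \<in> {0..n}-{k}" using that by auto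
    ultimately show ?thesis by (metis image_eqI)
  qed
  have e0: "ext_root n c \<alpha> 0 \<in> ?S" using False by auto
  have sum_split: "(\<Sum>j=1..n. c j *\<^sub>R \<alpha> j) = c k *\<^sub>R \<alpha> k + (\<Sum>j\<in>{1..n}-{k}. c j *\<^sub>R \<alpha> j)"
    using k1 by (simp add: sum.remove)
  have ck: "c k \<noteq> 0" using nz k1 by blast
  have e0v: "ext_root n c \<alpha> 0 = - (\<Sum>j=1..n. c j *\<^sub>R \<alpha> j)"
    unfolding ext_root_def by simp
  have "- ext_root n c \<alpha> 0 - (\<Sum>j\<in>{1..n}-{k}. c j *\<^sub>R \<alpha> j) = c k *\<^sub>R \<alpha> k"
    unfolding e0v sum_split by simp
  hence ak: "\<alpha> k = (1 / c k) *\<^sub>R (- ext_root n c \<alpha> 0 - (\<Sum>j\<in>{1..n}-{k}. c j *\<^sub>R \<alpha> j))"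
    using ck by simp
  have h1: "(\<Sum>j\<in>{1..n}-{k}. c j *\<^sub>R \<alpha> j) \<in> span ?S"
    by (rule span_sum, rule span_scale, rule span_base, rule aS) auto
  have h2: "- ext_root n c \<alpha> 0 \<in> span ?S"
    using e0 by (intro span_neg span_base)
  have "\<alpha> k \<in> span ?S"
    by (subst ak, rule span_scale, rule span_diff[OF h2 h1])
  hence sub: "\<alpha> ` {1..n} \<subseteq> span ?S" using aS span_base by blast
  have "span (\<alpha> ` {1..n}) \<subseteq> span ?S"
    using span_mono[OF sub] by (simp only: span_span)
  hence spS: "span ?S = UNIV" using sp by blast
  have "dim (UNIV::'v set) = dim (\<alpha> ` {1..n})" using sp dim_span by metis
  also have "\<dots> = card (\<alpha> ` {1..n})" by (rule dim_eq_card_independent[OF ind])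
  also have "\<dots> = n" using card_image[OF inj] by simp
  finally have dimU: "dim (UNIV::'v set) = n" .
  have fin: "finite ?S" by simp
  have cardS: "card ?S \<le> n"
    using card_image_le[of "{0..n}-{k}" "ext_root n c \<alpha>"] k by simp
  obtain B where B: "B \<subseteq> ?S" "independent B" "?S \<subseteq> span B"
    by (rule maximal_independent_subset)
  have "span ?S \<subseteq> span B" using span_mono[OF B(3)] by (simp only: span_span)
  hence "UNIV \<subseteq> span B" using spS by simp
  hence "card B = dim (UNIV::'v set)" using basis_card_eq_dim[of B UNIV] B(2) by simp
  hence "card ?S \<le> card B" using cardS dimU by simp
  hence "card B = card ?S" using card_mono[OF fin B(1)] by (rule antisym[rotated])
  hence "B = ?S" by (rule card_subset_eq[OF fin B(1)])
  hence indS: "independent ?S" using B(2) by simp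
  have "card ?S = dim ?S" using dim_eq_card_independent[OF indS] by simp
  also have "\<dots> = dim (UNIV::'v set)" using spS dim_span by metis
  finally have "card ?S = n" using dimU by simp
  hence "inj_on (ext_root n c \<alpha>) ({0..n}-{k})"
    using k by (intro eq_card_imp_inj_on) auto
  thus ?thesis using spS indS by simp
qed

lemma split0:
  fixes g :: "nat \<Rightarrow> 'x::comm_monoid_add"
  shows "(\<Sum>j\<in>{0..n}. g j) = g 0 + (\<Sum>j\<in>{1..n}. g j)"
  using sum.atLeast_Suc_atMost[of 0 n g] by simp

lemma twist_gen:
  fixes \<alpha> :: "nat \<Rightarrow> 'v::real_vector" and a :: "nat \<Rightarrow> 'w::real_inner"
  assumes inj: "inj_on \<alpha> {1..n}" and ind: "independent (\<alpha> ` {1..n})"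
    and sp: "span (\<alpha> ` {1..n}) = UNIV"
    and nz: "\<forall>k\<in>{1..n}. c k \<noteq> 0"
    and inv: "\<And>\<rho>. dynkin_aut n A \<rho> \<Longrightarrow> \<forall>i\<in>{0..n}. ce c (\<rho> i) = ce c i"
  shows "twist_claim n A c \<alpha> img m a"
  unfolding twist_claim_def
proof (intro allI impI)
  fix \<rho> assume aut: "dynkin_aut n A \<rho>"
  let ?e = "ext_root n c \<alpha>"
  have bij: "bij_betw \<rho> {0..n} {0..n}" using aut dynkin_aut_def by blast
  have injr: "inj_on \<rho> {0..n}" and imr: "\<rho> ` {0..n} = {0..n}"
    using bij by (auto simp: bij_betw_def)
  have k: "\<rho> 0 \<in> {0..n}" using imr by auto
  have d: "{1..n} = {0..n} - {0::nat}" by auto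
  have im1: "\<rho> ` {1..n} = {0..n} - {\<rho> 0}"
    unfolding d using inj_on_image_set_diff[OF injr, of "{0..n}" "{0}"] imr by auto
  have E: "(?e \<circ> \<rho>) ` {1..n} = ?e ` ({0..n}-{\<rho> 0})"
    by (simp only: image_comp[symmetric] im1)
  note X = exch[OF inj ind sp nz k]
  have inj1: "inj_on \<rho> {1..n}" using injr by (rule inj_on_subset) auto
  have injc: "inj_on (?e \<circ> \<rho>) {1..n}"
    by (rule comp_inj_on[OF inj1]) (simp only: im1 X)
  have rel: "(\<Sum>j\<in>{0..n}. ce c j *\<^sub>R ?e j) = 0"
  proof -
    have "(\<Sum>j\<in>{1..n}. ce c j *\<^sub>R ?e j) = (\<Sum>j\<in>{1..n}. c j *\<^sub>R \<alpha> j)"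
      by (rule sum.cong) (auto simp: ce_def ext_root_def)
    thus ?thesis unfolding split0 by (simp add: ce_def ext_root_def)
  qed
  have ceq: "\<forall>i\<in>{0..n}. ce c (\<rho> i) = ce c i" using inv[OF aut] .
  show "inj_on (?e \<circ> \<rho>) {1..n} \<and>
      independent ((?e \<circ> \<rho>) ` {1..n}) \<and>
      span ((?e \<circ> \<rho>) ` {1..n}) = UNIV \<and>
      (\<forall>p f. linear p \<and> (\<forall>i\<in>{1..n}. p (\<alpha> i) = img i) \<and>
             linear f \<and> (\<forall>i\<in>{1..n}. f (?e (\<rho> i)) = p (\<alpha> i)) \<longrightarrow>
         f (?e (\<rho> 0)) = p (?e 0) \<and>
         (\<forall>i\<in>{0..m}. \<forall>j\<in>{0..m}.
            induced_cartan a (f (?e (\<rho> 0))) i j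
            = induced_cartan a (p (?e 0)) i j))"
  proof (intro conjI allI impI)
    show "inj_on (?e \<circ> \<rho>) {1..n}" by (rule injc)
    show "independent ((?e \<circ> \<rho>) ` {1..n})" unfolding E using X by blast
    show "span ((?e \<circ> \<rho>) ` {1..n}) = UNIV" unfolding E using X by blast
    fix p f
    assume H: "linear p \<and> (\<forall>i\<in>{1..n}. p (\<alpha> i) = img i) \<and>
             linear f \<and> (\<forall>i\<in>{1..n}. f (?e (\<rho> i)) = p (\<alpha> i))"
    hence lp: "linear p" and lf: "linear f" and fp: "\<forall>i\<in>{1..n}. f (?e (\<rho> i)) = p (\<alpha> i)"
      by auto
    have "0 = f (\<Sum>j\<in>{0..n}. ce c j *\<^sub>R ?e j)" using rel linear_0[OF lf] by simp
    also have "\<dots> = (\<Sum>j\<in>{0..n}. ce c j *\<^sub>R f (?e j))"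
      by (simp add: linear_sum[OF lf] linear_scale[OF lf])
    also have "\<dots> = (\<Sum>i\<in>{0..n}. ce c (\<rho> i) *\<^sub>R f (?e (\<rho> i)))"
      by (rule sum.reindex_bij_betw[OF bij, symmetric])
    also have "\<dots> = (\<Sum>i\<in>{0..n}. ce c i *\<^sub>R f (?e (\<rho> i)))"
      by (rule sum.cong) (use ceq in auto)
    also have "\<dots> = f (?e (\<rho> 0)) + (\<Sum>i\<in>{1..n}. c i *\<^sub>R p (\<alpha> i))"
    proof -
      have "(\<Sum>i\<in>{1..n}. ce c i *\<^sub>R f (?e (\<rho> i))) = (\<Sum>i\<in>{1..n}. c i *\<^sub>R p (\<alpha> i))"
        by (rule sum.cong) (use fp in \<open>auto simp: ce_def\<close>)
      thus ?thesis unfolding split0 by (simp add: ce_def)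
    qed
    finally have z: "f (?e (\<rho> 0)) = - (\<Sum>i\<in>{1..n}. c i *\<^sub>R p (\<alpha> i))"
      by (simp add: eq_neg_iff_add_eq_0)
    have "p (?e 0) = - (\<Sum>i\<in>{1..n}. c i *\<^sub>R p (\<alpha> i))"
      by (simp add: ext_root_def linear_neg[OF lp] linear_sum[OF lp] linear_scale[OF lp])
    thus eq: "f (?e (\<rho> 0)) = p (?e 0)" using z by simp
    show "\<forall>i\<in>{0..m}. \<forall>j\<in>{0..m}. induced_cartan a (f (?e (\<rho> 0))) i j = induced_cartan a (p (?e 0)) i j"
      using eq by simp
  qed
qed

lemma inv_kernel:
  assumes aut: "dynkin_aut n A \<rho>"
    and null: "\<forall>i\<in>{0..n}. (\<Sum>j\<in>{0..n}. A i j * x j) = 0"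
    and uniq: "\<forall>y. (\<forall>i\<in>{0..n}. (\<Sum>j\<in>{0..n}. A i j * y j) = 0) \<longrightarrow> (\<forall>i\<in>{0..n}. y i = y 0 * x i)"
    and snz: "(\<Sum>j\<in>{0..n}. x j) \<noteq> 0"
  shows "\<forall>i\<in>{0..n}. x (\<rho> i) = x i"
proof -
  have bij: "bij_betw \<rho> {0..n} {0..n}" and pres: "\<forall>i\<in>{0..n}. \<forall>j\<in>{0..n}. A (\<rho> i) (\<rho> j) = A i j"
    using aut by (auto simp: dynkin_aut_def)
  have ri: "\<rho> i \<in> {0..n}" if "i \<in> {0..n}" for i
    using bij that by (auto simp: bij_betw_def)
  have "\<forall>i\<in>{0..n}. (\<Sum>j\<in>{0..n}. A i j * x (\<rho> j)) = 0"
  proof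
    fix i assume i: "i \<in> {0..n}"
    have "(\<Sum>j\<in>{0..n}. A i j * x (\<rho> j)) = (\<Sum>j\<in>{0..n}. A (\<rho> i) (\<rho> j) * x (\<rho> j))"
      by (rule sum.cong) (use pres i in auto)
    also have "\<dots> = (\<Sum>j\<in>{0..n}. A (\<rho> i) j * x j)"
      by (rule sum.reindex_bij_betw[OF bij, where g = "\<lambda>j. A (\<rho> i) j * x j"])
    also have "\<dots> = 0" using null ri[OF i] by blast
    finally show "(\<Sum>j\<in>{0..n}. A i j * x (\<rho> j)) = 0" .
  qed
  hence all: "\<forall>i\<in>{0..n}. x (\<rho> i) = x (\<rho> 0) * x i"
    using uniq[rule_format, of "\<lambda>j. x (\<rho> j)"] by blast
  have "(\<Sum>j\<in>{0..n}. x j) = (\<Sum>j\<in>{0..n}. x (\<rho> j))"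
    using sum.reindex_bij_betw[OF bij, of x] by simp
  also have "\<dots> = (\<Sum>j\<in>{0..n}. x (\<rho> 0) * x j)"
    by (rule sum.cong) (use all in blast)+
  also have "\<dots> = x (\<rho> 0) * (\<Sum>j\<in>{0..n}. x j)" by (simp add: sum_distrib_left)
  finally have one: "x (\<rho> 0) = 1" using snz by simp
  show ?thesis
  proof
    fix i assume "i \<in> {0..n}"
    hence "x (\<rho> i) = x (\<rho> 0) * x i" using all by blast
    thus "x (\<rho> i) = x i" using one by simp
  qed
qed

lemma set7: "{0..6::nat} = {0,1,2,3,4,5,6}" by auto
lemma sum7: "(\<Sum>j\<in>{0..6::nat}. g j) = g 0 + g 1 + g 2 + g 3 + g 4 + g 5 + g 6"
  by (simp add: eval_nat_numeral atLeast0_atMost_Suc ac_simps)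
lemma set5: "{0..4::nat} = {0,1,2,3,4}" by auto

lemma inv_A4eq: "dynkin_aut 4 cartan_A4_eq \<rho> \<Longrightarrow> \<forall>i\<in>{0..4}. ce coef_A4_eq (\<rho> i) = ce coef_A4_eq i"
proof -
  assume aut: "dynkin_aut 4 cartan_A4_eq \<rho>"
  have "\<rho> i \<in> {0..4}" if "i \<in> {0..4}" for i
    using aut that by (auto simp: dynkin_aut_def bij_betw_def)
  thus ?thesis by (auto simp: ce_def coef_A4_eq_def)
qed

lemma inv_D6eq: "dynkin_aut 6 cartan_D6_eq \<rho> \<Longrightarrow> \<forall>i\<in>{0..6}. ce coef_D6_eq (\<rho> i) = ce coef_D6_eq i"
proof -
  assume aut: "dynkin_aut 6 cartan_D6_eq \<rho>"
  show ?thesis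
  proof (rule inv_kernel[OF aut, where x = "ce coef_D6_eq"])
  note defs = cartan_D6_eq_def sl_cartan_def edgeD6_def ce_def coef_D6_eq_def
  show "\<forall>i\<in>{0..6}. (\<Sum>j\<in>{0..6}. cartan_D6_eq i j * ce coef_D6_eq j) = 0"
    unfolding sum7 by (simp add: set7 defs)
  show "(\<Sum>j\<in>{0..6}. ce coef_D6_eq j) \<noteq> 0"
    unfolding sum7 by (simp add: defs)
  show "\<forall>y. (\<forall>i\<in>{0..6}. (\<Sum>j\<in>{0..6}. cartan_D6_eq i j * y j) = 0) \<longrightarrow> (\<forall>i\<in>{0..6}. y i = y 0 * ce coef_D6_eq i)"
  proof (intro allI impI)
    fix y :: "nat \<Rightarrow> real"
    assume "\<forall>i\<in>{0..6}. (\<Sum>j\<in>{0..6}. cartan_D6_eq i j * y j) = 0"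
    hence r: "\<And>i. i \<in> {0..6} \<Longrightarrow> (\<Sum>j\<in>{0..6}. cartan_D6_eq i j * y j) = 0" by blast
    have s0: "(\<Sum>j\<in>{0..6}. cartan_D6_eq 0 j * y j) = 2 * y 0 - y 2"
      unfolding sum7 by (simp add: defs)
    have f0: "2 * y 0 - y 2 = 0" using r[of 0] s0 by simp
    have s1: "(\<Sum>j\<in>{0..6}. cartan_D6_eq 1 j * y j) = 2 * y 1 - y 2"
      unfolding sum7 by (simp add: defs)
    have f1: "2 * y 1 - y 2 = 0" using r[of 1] s1 by simp
    have s2: "(\<Sum>j\<in>{0..6}. cartan_D6_eq 2 j * y j) = - y 0 - y 1 + 2 * y 2 - y 3"
      unfolding sum7 by (simp add: defs)
    have f2: "- y 0 - y 1 + 2 * y 2 - y 3 = 0" using r[of 2] s2 by simp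
    have s3: "(\<Sum>j\<in>{0..6}. cartan_D6_eq 3 j * y j) = - y 2 + 2 * y 3 - y 4"
      unfolding sum7 by (simp add: defs)
    have f3: "- y 2 + 2 * y 3 - y 4 = 0" using r[of 3] s3 by simp
    have s4: "(\<Sum>j\<in>{0..6}. cartan_D6_eq 4 j * y j) = - y 3 + 2 * y 4 - y 5 - y 6"
      unfolding sum7 by (simp add: defs)
    have f4: "- y 3 + 2 * y 4 - y 5 - y 6 = 0" using r[of 4] s4 by simp
    have s5: "(\<Sum>j\<in>{0..6}. cartan_D6_eq 5 j * y j) = - y 4 + 2 * y 5"
      unfolding sum7 by (simp add: defs)
    have f5: "- y 4 + 2 * y 5 = 0" using r[of 5] s5 by simp
    have s6: "(\<Sum>j\<in>{0..6}. cartan_D6_eq 6 j * y j) = - y 4 + 2 * y 6"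
      unfolding sum7 by (simp add: defs)
    have f6: "- y 4 + 2 * y 6 = 0" using r[of 6] s6 by simp
    have "y 0 = y 0 * (1)" "y 1 = y 0 * (1)" "y 2 = y 0 * (2)" "y 3 = y 0 * (2)"
       "y 4 = y 0 * (2)" "y 5 = y 0 * (1)" "y 6 = y 0 * (1)"
      using f0 f1 f2 f3 f4 f5 f6 by linarith+
    thus "\<forall>i\<in>{0..6}. y i = y 0 * ce coef_D6_eq i"
      unfolding set7 by (simp add: ce_def coef_D6_eq_def)
  qed
  qed
qed

lemma inv_D6lt: "dynkin_aut 6 cartan_D6_lt \<rho> \<Longrightarrow> \<forall>i\<in>{0..6}. ce coef_D6_lt (\<rho> i) = ce coef_D6_lt i"
proof -
  assume aut: "dynkin_aut 6 cartan_D6_lt \<rho>"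
  show ?thesis
  proof (rule inv_kernel[OF aut, where x = "ce coef_D6_lt"])
  note defs = cartan_D6_lt_def sl_cartan_def edgeD6_def ce_def coef_D6_lt_def
  show "\<forall>i\<in>{0..6}. (\<Sum>j\<in>{0..6}. cartan_D6_lt i j * ce coef_D6_lt j) = 0"
    unfolding sum7 by (simp add: set7 defs)
  show "(\<Sum>j\<in>{0..6}. ce coef_D6_lt j) \<noteq> 0"
    unfolding sum7 by (simp add: defs)
  show "\<forall>y. (\<forall>i\<in>{0..6}. (\<Sum>j\<in>{0..6}. cartan_D6_lt i j * y j) = 0) \<longrightarrow> (\<forall>i\<in>{0..6}. y i = y 0 * ce coef_D6_lt i)"
  proof (intro allI impI)
    fix y :: "nat \<Rightarrow> real"
    assume "\<forall>i\<in>{0..6}. (\<Sum>j\<in>{0..6}. cartan_D6_lt i j * y j) = 0"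
    hence r: "\<And>i. i \<in> {0..6} \<Longrightarrow> (\<Sum>j\<in>{0..6}. cartan_D6_lt i j * y j) = 0" by blast
    have s0: "(\<Sum>j\<in>{0..6}. cartan_D6_lt 0 j * y j) = 2 * y 0 - 2 * y 1"
      unfolding sum7 by (simp add: defs)
    have f0: "2 * y 0 - 2 * y 1 = 0" using r[of 0] s0 by simp
    have s1: "(\<Sum>j\<in>{0..6}. cartan_D6_lt 1 j * y j) = - y 0 + 2 * y 1 - y 2"
      unfolding sum7 by (simp add: defs)
    have f1: "- y 0 + 2 * y 1 - y 2 = 0" using r[of 1] s1 by simp
    have s2: "(\<Sum>j\<in>{0..6}. cartan_D6_lt 2 j * y j) = - y 1 + 2 * y 2 - y 3"
      unfolding sum7 by (simp add: defs)
    have f2: "- y 1 + 2 * y 2 - y 3 = 0" using r[of 2] s2 by simp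
    have s3: "(\<Sum>j\<in>{0..6}. cartan_D6_lt 3 j * y j) = - y 2 + 2 * y 3 - y 4"
      unfolding sum7 by (simp add: defs)
    have f3: "- y 2 + 2 * y 3 - y 4 = 0" using r[of 3] s3 by simp
    have s4: "(\<Sum>j\<in>{0..6}. cartan_D6_lt 4 j * y j) = - y 3 + 2 * y 4 - y 5 - y 6"
      unfolding sum7 by (simp add: defs)
    have f4: "- y 3 + 2 * y 4 - y 5 - y 6 = 0" using r[of 4] s4 by simp
    have s5: "(\<Sum>j\<in>{0..6}. cartan_D6_lt 5 j * y j) = - y 4 + 2 * y 5"
      unfolding sum7 by (simp add: defs)
    have f5: "- y 4 + 2 * y 5 = 0" using r[of 5] s5 by simp
    have s6: "(\<Sum>j\<in>{0..6}. cartan_D6_lt 6 j * y j) = - y 4 + 2 * y 6"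
      unfolding sum7 by (simp add: defs)
    have f6: "- y 4 + 2 * y 6 = 0" using r[of 6] s6 by simp
    have "y 0 = y 0 * (1)" "y 1 = y 0 * (1)" "y 2 = y 0 * (1)" "y 3 = y 0 * (1)"
       "y 4 = y 0 * (1)" "y 5 = y 0 * (1/2)" "y 6 = y 0 * (1/2)"
      using f0 f1 f2 f3 f4 f5 f6 by linarith+
    thus "\<forall>i\<in>{0..6}. y i = y 0 * ce coef_D6_lt i"
      unfolding set7 by (simp add: ce_def coef_D6_lt_def)
  qed
  qed
qed

lemma inv_D6gt: "dynkin_aut 6 cartan_D6_gt \<rho> \<Longrightarrow> \<forall>i\<in>{0..6}. ce coef_D6_gt (\<rho> i) = ce coef_D6_gt i"
proof -
  assume aut: "dynkin_aut 6 cartan_D6_gt \<rho>"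
  show ?thesis
  proof (rule inv_kernel[OF aut, where x = "ce coef_D6_gt"])
  note defs = cartan_D6_gt_def sl_cartan_def edgeD6_def ce_def coef_D6_gt_def
  show "\<forall>i\<in>{0..6}. (\<Sum>j\<in>{0..6}. cartan_D6_gt i j * ce coef_D6_gt j) = 0"
    unfolding sum7 by (simp add: set7 defs)
  show "(\<Sum>j\<in>{0..6}. ce coef_D6_gt j) \<noteq> 0"
    unfolding sum7 by (simp add: defs)
  show "\<forall>y. (\<forall>i\<in>{0..6}. (\<Sum>j\<in>{0..6}. cartan_D6_gt i j * y j) = 0) \<longrightarrow> (\<forall>i\<in>{0..6}. y i = y 0 * ce coef_D6_gt i)"
  proof (intro allI impI)
    fix y :: "nat \<Rightarrow> real"
    assume "\<forall>i\<in>{0..6}. (\<Sum>j\<in>{0..6}. cartan_D6_gt i j * y j) = 0"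
    hence r: "\<And>i. i \<in> {0..6} \<Longrightarrow> (\<Sum>j\<in>{0..6}. cartan_D6_gt i j * y j) = 0" by blast
    have s0: "(\<Sum>j\<in>{0..6}. cartan_D6_gt 0 j * y j) = 2 * y 0 - y 1"
      unfolding sum7 by (simp add: defs)
    have f0: "2 * y 0 - y 1 = 0" using r[of 0] s0 by simp
    have s1: "(\<Sum>j\<in>{0..6}. cartan_D6_gt 1 j * y j) = - 2 * y 0 + 2 * y 1 - y 2"
      unfolding sum7 by (simp add: defs)
    have f1: "- 2 * y 0 + 2 * y 1 - y 2 = 0" using r[of 1] s1 by simp
    have s2: "(\<Sum>j\<in>{0..6}. cartan_D6_gt 2 j * y j) = - y 1 + 2 * y 2 - y 3"
      unfolding sum7 by (simp add: defs)
    have f2: "- y 1 + 2 * y 2 - y 3 = 0" using r[of 2] s2 by simp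
    have s3: "(\<Sum>j\<in>{0..6}. cartan_D6_gt 3 j * y j) = - y 2 + 2 * y 3 - y 4"
      unfolding sum7 by (simp add: defs)
    have f3: "- y 2 + 2 * y 3 - y 4 = 0" using r[of 3] s3 by simp
    have s4: "(\<Sum>j\<in>{0..6}. cartan_D6_gt 4 j * y j) = - y 3 + 2 * y 4 - y 5 - y 6"
      unfolding sum7 by (simp add: defs)
    have f4: "- y 3 + 2 * y 4 - y 5 - y 6 = 0" using r[of 4] s4 by simp
    have s5: "(\<Sum>j\<in>{0..6}. cartan_D6_gt 5 j * y j) = - y 4 + 2 * y 5"
      unfolding sum7 by (simp add: defs)
    have f5: "- y 4 + 2 * y 5 = 0" using r[of 5] s5 by simp
    have s6: "(\<Sum>j\<in>{0..6}. cartan_D6_gt 6 j * y j) = - y 4 + 2 * y 6"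
      unfolding sum7 by (simp add: defs)
    have f6: "- y 4 + 2 * y 6 = 0" using r[of 6] s6 by simp
    have "y 0 = y 0 * (1)" "y 1 = y 0 * (2)" "y 2 = y 0 * (2)" "y 3 = y 0 * (2)"
       "y 4 = y 0 * (2)" "y 5 = y 0 * (1)" "y 6 = y 0 * (1)"
      using f0 f1 f2 f3 f4 f5 f6 by linarith+
    thus "\<forall>i\<in>{0..6}. y i = y 0 * ce coef_D6_gt i"
      unfolding set7 by (simp add: ce_def coef_D6_gt_def)
  qed
  qed
qed

theorem mainTheorem2:
  fixes \<alpha> :: "nat \<Rightarrow> 'v::real_vector"   \<comment> \<open>basis of V_4\<close>
    and \<beta> :: "nat \<Rightarrow> 'u::real_vector"   \<comment> \<open>basis of V_6\<close>
    and a ab :: "nat \<Rightarrow> real^3"          \<comment> \<open>H_3 roots a_i and bar a_i\<close>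
    and h hb :: "nat \<Rightarrow> real^2"          \<comment> \<open>H_2 roots a_i and bar a_i\<close>
  assumes "inj_on \<alpha> {1..4}" "independent (\<alpha> ` {1..4})" "span (\<alpha> ` {1..4}) = UNIV"
    and "inj_on \<beta> {1..6}" "independent (\<beta> ` {1..6})" "span (\<beta> ` {1..6}) = UNIV"
    and "\<forall>i\<in>{1..3}. inner (a i) (a i) = 1" "inner (a 1) (a 2) = -1/2"
        "inner (a 2) (a 3) = - tau / 2" "inner (a 1) (a 3) = 0"
    and "\<forall>i\<in>{1..3}. inner (ab i) (ab i) = 1" "inner (ab 1) (ab 2) = -1/2"
        "inner (ab 2) (ab 3) = - sig / 2" "inner (ab 1) (ab 3) = 0"
    and "\<forall>i\<in>{1..2}. inner (h i) (h i) = 1" "inner (h 1) (h 2) = - tau / 2"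
    and "\<forall>i\<in>{1..2}. inner (hb i) (hb i) = 1" "inner (hb 1) (hb 2) = - sig / 2"
  shows
    "twist_claim 4 cartan_A4_eq coef_A4_eq \<alpha> (img_A4 tau h) 2 h \<and>
     twist_claim 4 cartan_A4_eq coef_A4_eq \<alpha> (img_A4 sig hb) 2 hb \<and>
     twist_claim 6 cartan_D6_gt coef_D6_gt \<beta> (img_D6 tau a) 3 a \<and>
     twist_claim 6 cartan_D6_gt coef_D6_gt \<beta> (img_D6 sig ab) 3 ab \<and>
     twist_claim 6 cartan_D6_eq coef_D6_eq \<beta> (img_D6 tau a) 3 a \<and>
     twist_claim 6 cartan_D6_eq coef_D6_eq \<beta> (img_D6 sig ab) 3 ab \<and>
     twist_claim 6 cartan_D6_lt coef_D6_lt \<beta> (img_D6 tau a) 3 a \<and>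
     twist_claim 6 cartan_D6_lt coef_D6_lt \<beta> (img_D6 sig ab) 3 ab"
proof -
  have nA: "\<forall>k\<in>{1..4}. coef_A4_eq k \<noteq> 0" by (auto simp add: coef_A4_eq_def)
  have n1: "\<forall>k\<in>{1..6}. coef_D6_eq k \<noteq> 0" by (auto simp add: coef_D6_eq_def)
  have n2: "\<forall>k\<in>{1..6}. coef_D6_lt k \<noteq> 0" by (auto simp add: coef_D6_lt_def)
  have n3: "\<forall>k\<in>{1..6}. coef_D6_gt k \<noteq> 0" by (auto simp add: coef_D6_gt_def)
  note GA = twist_gen[OF assms(1) assms(2) assms(3) nA inv_A4eq]
  note G1 = twist_gen[OF assms(4) assms(5) assms(6) n1 inv_D6eq]
  note G2 = twist_gen[OF assms(4) assms(5) assms(6) n2 inv_D6lt]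
  note G3 = twist_gen[OF assms(4) assms(5) assms(6) n3 inv_D6gt]
  show ?thesis using GA G1 G2 G3 by blast
qed

end
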